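(* An $L$-layer linear attention model with $H$ heads, dimension $d$ and precision $p$ cannot solve the permutation composition task $\mathsf{PerCom}$ on $[n]$ whenever $LHd(d+1)p<\log(n!)$ (note $\log(n!)=\Theta(n\log n)$). On the other hand, a single-layer full attention Transformer solves $\mathsf{PerCom}$ with $Hdp=O(\mathrm{poly}\log n)$. The same lower bound holds for linear attention with chain-of-thought.
   Context: Permutation composition $\mathsf{PerCom}(\sigma,\tau)$: the input consists of two bijections $\sigma,\tau:[n]\to[n]$, given as $n$ tokens $\sigma(1),\dots,\sigma(n)$ followed by $n$ tokens $\tau(1),\dots,\tau(n)$. The required output is the sequence $\sigma(\tau(1)),\dots,\sigma(\tau(n))$. Linear attention layer: head outputs $y_i=\sum_{j\le i}\alpha_{i,j}Vx_j$ with $\alpha_{i,j}=\varphi(Qx_i)^\top\varphi(Kx_j)/\sum_{j'\le i}\varphi(Qx_i)^\top\varphi(Kx_{j'})$ for an arbitrary $\varphi:\mathbb{R}^d\to\mathbb{R}^d$. Here $Q,K,V\in\mathbb{R}^{d\times dH}$ have $p$-bit entries, the $H$ heads are concatenated, and each layer is followed by an arbitrary position-wise MLP map. Full attention instead uses softmax weights $\alpha_{i,j}\propto\exp(\langle Qx_i,Kx_j\rangle)$. All quantities use $p$-bit precision. With chain-of-thought, the model autoregressively generates additional tokens after the input (each appended as a new position), and the answer is read from them. *)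

theory Defs
  imports Complex_Main
begin

text \<open>A p-bit number format is modelled by a rounding map whose range has at most 2^p values.\<close>
definition pbit :: "nat \<Rightarrow> (real \<Rightarrow> real) \<Rightarrow> bool" where
  "pbit p rnd \<longleftrightarrow> finite (range rnd) \<and> card (range rnd) \<le> 2 ^ p"

text \<open>Concrete signed fixed-point format with p bits (used for the upper bound).\<close>
definition fxp :: "nat \<Rightarrow> real \<Rightarrow> real" where
  "fxp p x = (let B = (2::int) ^ (p - 1) - 1;
                  k = max (- B) (min B (round (x * 2 ^ (p div 2))))
              in of_int k / 2 ^ (p div 2))"

section \<open>Vectors and matrices (finite-support functions on nat)\<close>

definition rvec :: "(real \<Rightarrow> real) \<Rightarrow> nat \<Rightarrow> (nat \<Rightarrow> real) \<Rightarrow> nat \<Rightarrow> real" where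
  "rvec rnd m v = (\<lambda>i. if i < m then rnd (v i) else 0)"

definition mv :: "nat \<Rightarrow> nat \<Rightarrow> (nat \<Rightarrow> nat \<Rightarrow> real) \<Rightarrow> (nat \<Rightarrow> real) \<Rightarrow> nat \<Rightarrow> real" where
  "mv r c A x = (\<lambda>a. if a < r then (\<Sum>b<c. A a b * x b) else 0)"

definition dotp :: "nat \<Rightarrow> (nat \<Rightarrow> real) \<Rightarrow> (nat \<Rightarrow> real) \<Rightarrow> real" where
  "dotp d u v = (\<Sum>a<d. u a * v a)"

text \<open>One layer: per head h, matrices Q h, K h, V h (d x dH, entries rounded to p bits),
  a feature map phi h (used only by linear attention), and an arbitrary position-wise MLP
  taking the residual stream vector and the concatenated head outputs.\<close>
record layer =
  Qw :: "nat \<Rightarrow> nat \<Rightarrow> nat \<Rightarrow> real"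
  Kw :: "nat \<Rightarrow> nat \<Rightarrow> nat \<Rightarrow> real"
  Vw :: "nat \<Rightarrow> nat \<Rightarrow> nat \<Rightarrow> real"
  phi :: "nat \<Rightarrow> (nat \<Rightarrow> real) \<Rightarrow> nat \<Rightarrow> real"
  mlp :: "(nat \<Rightarrow> real) \<Rightarrow> (nat \<Rightarrow> real) \<Rightarrow> nat \<Rightarrow> real"

text \<open>A model: token/position embedding, list of layers (L = length), output decoder.\<close>
record model =
  emb :: "nat \<Rightarrow> nat \<Rightarrow> nat \<Rightarrow> real"
  layers :: "layer list"
  dec :: "(nat \<Rightarrow> real) \<Rightarrow> nat"

datatype attn_kind = Linear | Full

definition proj :: "(real \<Rightarrow> real) \<Rightarrow> nat \<Rightarrow> nat \<Rightarrow> (nat \<Rightarrow> nat \<Rightarrow> real) \<Rightarrow> (nat \<Rightarrow> real) \<Rightarrow> nat \<Rightarrow> real" where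
  "proj rnd d H W x = rvec rnd d (mv d (d * H) (\<lambda>a b. rnd (W a b)) x)"

text \<open>Linear attention is computed with its p-bit prefix-sum state
  S_i = sum_{j<=i} phi(K x_j) (V x_j)^T,  z_i = sum_{j<=i} phi(K x_j).\<close>
definition lin_step :: "(real \<Rightarrow> real) \<Rightarrow> nat \<Rightarrow> (nat \<Rightarrow> real) \<Rightarrow> (nat \<Rightarrow> real)
    \<Rightarrow> (nat \<Rightarrow> nat \<Rightarrow> real) \<times> (nat \<Rightarrow> real) \<Rightarrow> (nat \<Rightarrow> nat \<Rightarrow> real) \<times> (nat \<Rightarrow> real)" where
  "lin_step rnd d fk v st =
     ((\<lambda>a b. if a < d \<and> b < d then rnd (fst st a b + fk a * v b) else 0),
      (\<lambda>a. if a < d then rnd (snd st a + fk a) else 0))"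

definition lin_state :: "(real \<Rightarrow> real) \<Rightarrow> nat \<Rightarrow> nat \<Rightarrow> layer \<Rightarrow> nat \<Rightarrow> (nat \<Rightarrow> real) list
    \<Rightarrow> (nat \<Rightarrow> nat \<Rightarrow> real) \<times> (nat \<Rightarrow> real)" where
  "lin_state rnd d H l h xs =
     fold (\<lambda>x st. lin_step rnd d (rvec rnd d (phi l h (proj rnd d H (Kw l h) x)))
                            (proj rnd d H (Vw l h) x) st)
          xs ((\<lambda>a b. 0), (\<lambda>a. 0))"

definition head_out :: "attn_kind \<Rightarrow> (real \<Rightarrow> real) \<Rightarrow> nat \<Rightarrow> nat \<Rightarrow> layer \<Rightarrow> nat
    \<Rightarrow> (nat \<Rightarrow> real) list \<Rightarrow> nat \<Rightarrow> nat \<Rightarrow> real" where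
  "head_out kind rnd d H l h xs i =
    (case kind of
      Linear \<Rightarrow>
        (let st = lin_state rnd d H l h (take (Suc i) xs);
             fq = rvec rnd d (phi l h (proj rnd d H (Qw l h) (xs ! i)));
             den = rnd (dotp d fq (snd st))
         in rvec rnd d (\<lambda>b. (\<Sum>a<d. fq a * fst st a b) / den))
    | Full \<Rightarrow>
        (let q = proj rnd d H (Qw l h) (xs ! i);
             w = (\<lambda>j. exp (dotp d q (proj rnd d H (Kw l h) (xs ! j))))
         in rvec rnd d (\<lambda>b. (\<Sum>j\<le>i. w j * proj rnd d H (Vw l h) (xs ! j) b) / (\<Sum>j\<le>i. w j))))"

definition concat_heads :: "nat \<Rightarrow> nat \<Rightarrow> (nat \<Rightarrow> nat \<Rightarrow> real) \<Rightarrow> nat \<Rightarrow> real" where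
  "concat_heads d H ys = (\<lambda>c. if c < d * H then ys (c div d) (c mod d) else 0)"

definition apply_layer :: "attn_kind \<Rightarrow> (real \<Rightarrow> real) \<Rightarrow> nat \<Rightarrow> nat \<Rightarrow> layer
    \<Rightarrow> (nat \<Rightarrow> real) list \<Rightarrow> (nat \<Rightarrow> real) list" where
  "apply_layer kind rnd d H l xs =
     map (\<lambda>i. rvec rnd (d * H) (mlp l (xs ! i) (concat_heads d H (\<lambda>h. head_out kind rnd d H l h xs i))))
         [0..<length xs]"

definition hidden :: "attn_kind \<Rightarrow> (real \<Rightarrow> real) \<Rightarrow> nat \<Rightarrow> nat \<Rightarrow> model \<Rightarrow> nat list
    \<Rightarrow> (nat \<Rightarrow> real) list" where
  "hidden kind rnd d H M toks =
     fold (apply_layer kind rnd d H) (layers M)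
          (map (\<lambda>i. rvec rnd (d * H) (emb M (toks ! i) i)) [0..<length toks])"

text \<open>Output token at (0-based) position i.\<close>
definition model_out :: "attn_kind \<Rightarrow> (real \<Rightarrow> real) \<Rightarrow> nat \<Rightarrow> nat \<Rightarrow> model \<Rightarrow> nat list \<Rightarrow> nat \<Rightarrow> nat" where
  "model_out kind rnd d H M toks i = dec M (hidden kind rnd d H M toks ! i)"

definition is_perm :: "nat \<Rightarrow> (nat \<Rightarrow> nat) \<Rightarrow> bool" where
  "is_perm n \<sigma> \<longleftrightarrow> bij_betw \<sigma> {1..n} {1..n}"

definition percom_input :: "nat \<Rightarrow> (nat \<Rightarrow> nat) \<Rightarrow> (nat \<Rightarrow> nat) \<Rightarrow> nat list" where
  "percom_input n \<sigma> \<tau> = map \<sigma> [1..<Suc n] @ map \<tau> [1..<Suc n]"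

text \<open>Without chain-of-thought: the output at the position of token tau(i) is sigma(tau(i)).\<close>
definition solves :: "attn_kind \<Rightarrow> (real \<Rightarrow> real) \<Rightarrow> nat \<Rightarrow> nat \<Rightarrow> nat \<Rightarrow> model \<Rightarrow> bool" where
  "solves kind rnd d H n M \<longleftrightarrow>
     (\<forall>\<sigma> \<tau>. is_perm n \<sigma> \<longrightarrow> is_perm n \<tau> \<longrightarrow>
        (\<forall>i\<in>{1..n}. model_out kind rnd d H M (percom_input n \<sigma> \<tau>) (n + i - 1) = \<sigma> (\<tau> i)))"

text \<open>Chain-of-thought: autoregressive generation of t further tokens.\<close>
primrec cot_seq :: "attn_kind \<Rightarrow> (real \<Rightarrow> real) \<Rightarrow> nat \<Rightarrow> nat \<Rightarrow> model \<Rightarrow> nat list \<Rightarrow> nat \<Rightarrow> nat list" where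
  "cot_seq kind rnd d H M toks 0 = toks"
| "cot_seq kind rnd d H M toks (Suc t) =
     (let s = cot_seq kind rnd d H M toks t in s @ [model_out kind rnd d H M s (length s - 1)])"

text \<open>Solving with CoT: for some CoT length T and fixed answer positions r(i) among the
  T generated tokens, the r(i)-th generated token is sigma(tau(i)).\<close>
definition solves_cot :: "attn_kind \<Rightarrow> (real \<Rightarrow> real) \<Rightarrow> nat \<Rightarrow> nat \<Rightarrow> nat \<Rightarrow> model \<Rightarrow> bool" where
  "solves_cot kind rnd d H n M \<longleftrightarrow>
     (\<exists>T r. \<forall>\<sigma> \<tau>. is_perm n \<sigma> \<longrightarrow> is_perm n \<tau> \<longrightarrow>
        (\<forall>i\<in>{1..n}. r i < T \<and>
           cot_seq kind rnd d H M (percom_input n \<sigma> \<tau>) T ! (2 * n + r i) = \<sigma> (\<tau> i)))"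

end

theory Submission
  imports Defs "HOL-Library.FuncSet" "HOL-Combinatorics.Permutations"
begin


definition emb0 :: "(real \<Rightarrow> real) \<Rightarrow> nat \<Rightarrow> nat \<Rightarrow> model \<Rightarrow> nat list \<Rightarrow> (nat \<Rightarrow> real) list" where
  "emb0 rnd d H M toks = map (\<lambda>i. rvec rnd (d * H) (emb M (toks ! i) i)) [0..<length toks]"

lemma length_apply_layer[simp]: "length (apply_layer k rnd d H l xs) = length xs"
  by (simp add: apply_layer_def)

lemma length_fold_layers[simp]: "length (fold (apply_layer k rnd d H) Ls xs) = length xs"
  by (induct Ls arbitrary: xs) auto

lemma head_out_take:
  assumes "i < m"
  shows "head_out Linear rnd d H l h (take m xs) i = head_out Linear rnd d H l h xs i"
proof -
  have "take (Suc i) (take m xs) = take (Suc i) xs" using assms by (simp add: min_def)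
  moreover have "take m xs ! i = xs ! i"
  proof (cases "length xs \<le> m")
    case True then show ?thesis by simp
  next
    case False then show ?thesis using assms by simp
  qed
  ultimately show ?thesis unfolding head_out_def by simp
qed

lemma take_apply_layer:
  "take m (apply_layer Linear rnd d H l xs) = apply_layer Linear rnd d H l (take m xs)"
  unfolding apply_layer_def
  by (rule nth_equalityI) (auto simp: head_out_take)

lemma take_fold_layers:
  "take m (fold (apply_layer Linear rnd d H) Ls xs) = fold (apply_layer Linear rnd d H) Ls (take m xs)"
  by (induct Ls arbitrary: xs) (auto simp: take_apply_layer)

lemma take_emb0: "take m (emb0 rnd d H M toks) = emb0 rnd d H M (take m toks)"
  unfolding emb0_def by (rule nth_equalityI) auto

lemma lin_state_append:
  "lin_state rnd d H l h (xs @ ys) =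
   fold (\<lambda>x st. lin_step rnd d (rvec rnd d (phi l h (proj rnd d H (Kw l h) x)))
                            (proj rnd d H (Vw l h) x) st) ys (lin_state rnd d H l h xs)"
  unfolding lin_state_def by simp

lemma head_out_drop:
  assumes "n \<le> i" "i < length xs" "length xs = length ys" "drop n xs = drop n ys"
    "lin_state rnd d H l h (take n xs) = lin_state rnd d H l h (take n ys)"
  shows "head_out Linear rnd d H l h xs i = head_out Linear rnd d H l h ys i"
proof -
  have e: "Suc i = n + (Suc i - n)" using assms by simp
  have t1: "take (Suc i) xs = take n xs @ take (Suc i - n) (drop n xs)"
    by (subst e, rule take_add)
  have t2: "take (Suc i) ys = take n ys @ take (Suc i - n) (drop n ys)"
    by (subst e, rule take_add)
  have a: "drop n xs ! (i - n) = xs ! i" using assms(1,2) by simp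
  have b: "drop n ys ! (i - n) = ys ! i" using assms(1,2,3) by simp
  have xi: "xs ! i = ys ! i" using a b assms(4) by metis
  show ?thesis unfolding head_out_def
    by (simp only: t1 t2 lin_state_append assms(4) assms(5) xi attn_kind.case)
qed

lemma concat_heads_cong:
  assumes "\<And>h. h < H \<Longrightarrow> f h = g h"
  shows "concat_heads d H f = concat_heads d H g"
proof -
  have "\<And>c. c < d * H \<Longrightarrow> c div d < H"
    by (metis less_mult_imp_div_less mult.commute)
  then show ?thesis unfolding concat_heads_def using assms by auto
qed

lemma drop_apply_layer:
  assumes "length xs = length ys" "drop n xs = drop n ys"
    "\<And>h. h < H \<Longrightarrow> lin_state rnd d H l h (take n xs) = lin_state rnd d H l h (take n ys)"
  shows "drop n (apply_layer Linear rnd d H l xs) = drop n (apply_layer Linear rnd d H l ys)"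
proof (rule nth_equalityI)
  show "length (drop n (apply_layer Linear rnd d H l xs)) = length (drop n (apply_layer Linear rnd d H l ys))"
    using assms by simp
  fix j assume j: "j < length (drop n (apply_layer Linear rnd d H l xs))"
  define i where "i = n + j"
  have i: "n \<le> i" "i < length xs" using j by (auto simp: i_def)
  have a: "drop n xs ! j = xs ! i" using i by (simp add: i_def)
  have b: "drop n ys ! j = ys ! i" using i assms(1) by (simp add: i_def)
  have xi: "xs ! i = ys ! i" using a b assms(2) by metis
  have "\<And>h. h < H \<Longrightarrow> head_out Linear rnd d H l h xs i = head_out Linear rnd d H l h ys i"
    using head_out_drop[OF i assms(1,2) assms(3)] by blast
  then have "concat_heads d H (\<lambda>h. head_out Linear rnd d H l h xs i)
           = concat_heads d H (\<lambda>h. head_out Linear rnd d H l h ys i)"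
    by (rule concat_heads_cong)
  then show "drop n (apply_layer Linear rnd d H l xs) ! j = drop n (apply_layer Linear rnd d H l ys) ! j"
    using i assms(1) xi unfolding apply_layer_def by (simp add: i_def[symmetric])
qed

lemma drop_fold_layers:
  assumes "length xs = length ys" "drop n xs = drop n ys"
    "\<And>k h. k < length Ls \<Longrightarrow> h < H \<Longrightarrow>
       lin_state rnd d H (Ls ! k) h (take n (fold (apply_layer Linear rnd d H) (take k Ls) xs))
     = lin_state rnd d H (Ls ! k) h (take n (fold (apply_layer Linear rnd d H) (take k Ls) ys))"
  shows "drop n (fold (apply_layer Linear rnd d H) Ls xs) = drop n (fold (apply_layer Linear rnd d H) Ls ys)"
  using assms
proof (induct Ls arbitrary: xs ys)
  case Nil
  then show ?case by simp
next
  case (Cons l Ls)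
  have s0: "\<And>h. h < H \<Longrightarrow> lin_state rnd d H l h (take n xs) = lin_state rnd d H l h (take n ys)"
    using Cons.prems(3)[of 0] by simp
  have d1: "drop n (apply_layer Linear rnd d H l xs) = drop n (apply_layer Linear rnd d H l ys)"
    by (rule drop_apply_layer[OF Cons.prems(1,2) s0])
  have "drop n (fold (apply_layer Linear rnd d H) Ls (apply_layer Linear rnd d H l xs))
      = drop n (fold (apply_layer Linear rnd d H) Ls (apply_layer Linear rnd d H l ys))"
  proof (rule Cons.hyps)
    show "length (apply_layer Linear rnd d H l xs) = length (apply_layer Linear rnd d H l ys)"
      using Cons.prems by simp
    show "drop n (apply_layer Linear rnd d H l xs) = drop n (apply_layer Linear rnd d H l ys)" by (rule d1)
    fix k h assume "k < length Ls" "h < H"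
    then show "lin_state rnd d H (Ls ! k) h (take n (fold (apply_layer Linear rnd d H) (take k Ls) (apply_layer Linear rnd d H l xs))) =
         lin_state rnd d H (Ls ! k) h (take n (fold (apply_layer Linear rnd d H) (take k Ls) (apply_layer Linear rnd d H l ys)))"
      using Cons.prems(3)[of "Suc k" h] by simp
  qed
  then show ?case by simp
qed

definition Xs where
  "Xs rnd d H M k toks = fold (apply_layer Linear rnd d H) (take k (layers M)) (emb0 rnd d H M toks)"

definition ST where
  "ST rnd d H M n \<sigma> k h = lin_state rnd d H (layers M ! k) h (Xs rnd d H M k (map \<sigma> [1..<Suc n]))"

lemma hidden_emb0: "hidden Linear rnd d H M toks = fold (apply_layer Linear rnd d H) (layers M) (emb0 rnd d H M toks)"
  unfolding hidden_def emb0_def by simp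

lemma length_hidden[simp]: "length (hidden Linear rnd d H M toks) = length toks"
  unfolding hidden_emb0 by (simp add: emb0_def)

lemma key_drop:
  assumes "take n toks = map \<sigma> [1..<Suc n]" "take n toks' = map \<sigma>' [1..<Suc n]"
    "length toks = length toks'" "drop n toks = drop n toks'"
    "\<And>k h. k < length (layers M) \<Longrightarrow> h < H \<Longrightarrow> ST rnd d H M n \<sigma> k h = ST rnd d H M n \<sigma>' k h"
  shows "drop n (hidden Linear rnd d H M toks) = drop n (hidden Linear rnd d H M toks')"
  unfolding hidden_emb0
proof (rule drop_fold_layers)
  show "length (emb0 rnd d H M toks) = length (emb0 rnd d H M toks')" using assms by (simp add: emb0_def)
  show "drop n (emb0 rnd d H M toks) = drop n (emb0 rnd d H M toks')"
  proof (rule nth_equalityI)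
    show "length (drop n (emb0 rnd d H M toks)) = length (drop n (emb0 rnd d H M toks'))"
      using assms by (simp add: emb0_def)
    fix j assume "j < length (drop n (emb0 rnd d H M toks))"
    then have j: "n + j < length toks" by (simp add: emb0_def)
    have "toks ! (n + j) = toks' ! (n + j)"
      using assms(3,4) j by (metis nth_drop less_imp_le_nat add_lessD1 le_add1 order_le_less_trans)
    then show "drop n (emb0 rnd d H M toks) ! j = drop n (emb0 rnd d H M toks') ! j"
      using j assms(3) by (simp add: emb0_def)
  qed
  fix k h assume kh: "k < length (layers M)" "h < H"
  have "\<And>ts. take n (fold (apply_layer Linear rnd d H) (take k (layers M)) (emb0 rnd d H M ts))
      = Xs rnd d H M k (take n ts)"
    unfolding Xs_def by (simp add: take_fold_layers take_emb0)
  then show "lin_state rnd d H (layers M ! k) h (take n (fold (apply_layer Linear rnd d H) (take k (layers M)) (emb0 rnd d H M toks))) =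
         lin_state rnd d H (layers M ! k) h (take n (fold (apply_layer Linear rnd d H) (take k (layers M)) (emb0 rnd d H M toks')))"
    using assms(1,2) assms(5)[OF kh] unfolding ST_def by simp
qed

lemma key_nth:
  assumes "take n toks = map \<sigma> [1..<Suc n]" "take n toks' = map \<sigma>' [1..<Suc n]"
    "length toks = length toks'" "drop n toks = drop n toks'"
    "\<And>k h. k < length (layers M) \<Longrightarrow> h < H \<Longrightarrow> ST rnd d H M n \<sigma> k h = ST rnd d H M n \<sigma>' k h"
    "n \<le> j" "j < length toks"
  shows "hidden Linear rnd d H M toks ! j = hidden Linear rnd d H M toks' ! j"
proof -
  have e: "drop n (hidden Linear rnd d H M toks) = drop n (hidden Linear rnd d H M toks')"
    by (rule key_drop[OF assms(1-5)])
  have "hidden Linear rnd d H M toks ! j = drop n (hidden Linear rnd d H M toks) ! (j - n)"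
    using assms(6,7) by simp
  also have "\<dots> = hidden Linear rnd d H M toks' ! j"
    using assms(3,6,7) by (simp add: e)
  finally show ?thesis .
qed

definition goodst :: "real set \<Rightarrow> nat \<Rightarrow> (nat \<Rightarrow> nat \<Rightarrow> real) \<times> (nat \<Rightarrow> real) \<Rightarrow> bool" where
  "goodst R d st \<longleftrightarrow> (\<forall>a b. if a < d \<and> b < d then fst st a b \<in> R else fst st a b = 0)
      \<and> (\<forall>a. if a < d then snd st a \<in> R else snd st a = 0)"

lemma lin_step_good: "goodst (range rnd) d (lin_step rnd d fk v st)"
  unfolding goodst_def lin_step_def by auto

lemma fold_good: "(\<And>x s. P (F x s)) \<Longrightarrow> xs \<noteq> [] \<Longrightarrow> P (fold F xs s)"
proof (induct xs arbitrary: s)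
  case Nil then show ?case by simp
next
  case (Cons x xs) then show ?case by (cases "xs = []") auto
qed

lemma lin_state_good: "xs \<noteq> [] \<Longrightarrow> goodst (range rnd) d (lin_state rnd d H l h xs)"
  unfolding lin_state_def by (rule fold_good) (rule lin_step_good)

lemma ST_good: "n \<ge> 1 \<Longrightarrow> goodst (range rnd) d (ST rnd d H M n \<sigma> k h)"
  unfolding ST_def
  by (rule lin_state_good) (auto simp: Xs_def emb0_def simp flip: length_0_conv)

lemma goodst_eq:
  assumes "goodst R d s1" "goodst R d s2"
    "\<And>a b. a < d \<Longrightarrow> b < d \<Longrightarrow> fst s1 a b = fst s2 a b"
    "\<And>a. a < d \<Longrightarrow> snd s1 a = snd s2 a"
  shows "s1 = s2"
proof (rule prod_eqI)
  show "fst s1 = fst s2"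
  proof (intro ext)
    fix a b
    have h1: "if a < d \<and> b < d then fst s1 a b \<in> R else fst s1 a b = 0"
      using assms(1) unfolding goodst_def by blast
    have h2: "if a < d \<and> b < d then fst s2 a b \<in> R else fst s2 a b = 0"
      using assms(2) unfolding goodst_def by blast
    show "fst s1 a b = fst s2 a b"
      using h1 h2 assms(3)[of a b] by (auto split: if_splits)
  qed
  show "snd s1 = snd s2"
  proof (intro ext)
    fix a
    have h1: "if a < d then snd s1 a \<in> R else snd s1 a = 0"
      using assms(1) unfolding goodst_def by blast
    have h2: "if a < d then snd s2 a \<in> R else snd s2 a = 0"
      using assms(2) unfolding goodst_def by blast
    show "snd s1 a = snd s2 a"
      using h1 h2 assms(4)[of a] by (auto split: if_splits)
  qed
qed

lemma perm_eq:
  assumes "\<sigma> permutes {1..n}" "\<sigma>' permutes {1..n}" "\<And>i. i \<in> {1..n} \<Longrightarrow> \<sigma> i = \<sigma>' i"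
  shows "\<sigma> = \<sigma>'"
proof
  fix x show "\<sigma> x = \<sigma>' x"
    using assms by (cases "x \<in> {1..n}") (auto simp: permutes_def)
qed

lemma collision:
  assumes "pbit p rnd" "real (length (layers M) * H * d * (d + 1) * p) < log 2 (fact n)"
  shows "n \<ge> 2 \<and> (\<exists>\<sigma> \<sigma>'. \<sigma> permutes {1..n} \<and> \<sigma>' permutes {1..n} \<and> \<sigma> \<noteq> \<sigma>' \<and>
           (\<forall>k<length (layers M). \<forall>h<H. ST rnd d H M n \<sigma> k h = ST rnd d H M n \<sigma>' k h))"
proof -
  define L where "L = length (layers M)"
  define R where "R = range rnd"
  have fR: "finite R" and cR: "card R \<le> 2 ^ p" using assms(1) by (auto simp: pbit_def R_def)
  have n2: "n \<ge> 2"
  proof (rule ccontr)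
    assume "\<not> n \<ge> 2"
    then have "n = 0 \<or> n = 1" by auto
    then have "log 2 (fact n :: real) = 0" by auto
    then show False using assms(2) by simp
  qed
  define N where "N = L * H * d * (d + 1) * p"
  have "2 powr real N < fact n" using assms(2)
    by (subst less_log_iff[symmetric]) (auto simp: N_def L_def)
  then have "real (2 ^ N) < real (fact n)" by (simp add: powr_realpow)
  then have Nlt: "(2::nat) ^ N < fact n" by linarith
  define D where "D = {..<L} \<times> {..<H} \<times> {..<d} \<times> {..<Suc d}"
  have fD: "finite D" by (simp add: D_def)
  have cD: "card D = L * (H * (d * Suc d))" by (simp add: D_def card_cartesian_product)
  define sig where "sig = (\<lambda>\<sigma>. restrict (\<lambda>(k, h, a, b). if b < d then fst (ST rnd d H M n \<sigma> k h) a b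
                                   else snd (ST rnd d H M n \<sigma> k h) a) D)"
  define P where "P = {\<sigma>. \<sigma> permutes {1..n}}"
  have cP: "card P = fact n" unfolding P_def by (rule card_permutations) auto
  have good: "\<And>\<sigma> k h. goodst R d (ST rnd d H M n \<sigma> k h)"
    unfolding R_def by (rule ST_good) (use n2 in auto)
  have img: "sig ` P \<subseteq> PiE D (\<lambda>_. R)"
  proof
    fix f assume "f \<in> sig ` P"
    then obtain \<sigma> where f: "f = sig \<sigma>" by auto
    show "f \<in> PiE D (\<lambda>_. R)"
      unfolding f sig_def
    proof (rule restrict_PiE_iff[THEN iffD2], intro ballI)
      fix x assume "x \<in> D"
      then obtain k h a b where x: "x = (k, h, a, b)" "a < d" "b < Suc d" by (auto simp: D_def)
      show "(case x of (k, h, a, b) \<Rightarrow> if b < d then fst (ST rnd d H M n \<sigma> k h) a b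
                                   else snd (ST rnd d H M n \<sigma> k h) a) \<in> R"
      proof (cases "b < d")
        case True
        have "if a < d \<and> b < d then fst (ST rnd d H M n \<sigma> k h) a b \<in> R else fst (ST rnd d H M n \<sigma> k h) a b = 0"
          using good[of \<sigma> k h] unfolding goodst_def by blast
        then show ?thesis using True x by simp
      next
        case False
        have "if a < d then snd (ST rnd d H M n \<sigma> k h) a \<in> R else snd (ST rnd d H M n \<sigma> k h) a = 0"
          using good[of \<sigma> k h] unfolding goodst_def by blast
        then show ?thesis using False x by simp
      qed
    qed
  qed
  have fPi: "finite (PiE D (\<lambda>_. R))" using fD fR by (rule finite_PiE)
  have "card (PiE D (\<lambda>_. R)) = card R ^ card D" using fD by (simp add: card_PiE)
  also have "\<dots> \<le> (2 ^ p) ^ card D" using cR by (rule power_mono) simp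
  also have "\<dots> = 2 ^ N" by (simp add: cD N_def power_mult[symmetric] mult_ac)
  finally have "card (sig ` P) < card P"
    using card_mono[OF fPi img] Nlt cP by linarith
  then have "\<not> inj_on sig P"
  proof (intro notI)
    assume "card (sig ` P) < card P" "inj_on sig P"
    then show False using card_image[of sig P] by simp
  qed
  then obtain \<sigma> \<sigma>' where s: "\<sigma> \<in> P" "\<sigma>' \<in> P" "\<sigma> \<noteq> \<sigma>'" "sig \<sigma> = sig \<sigma>'"
    unfolding inj_on_def by blast
  have "\<forall>k<L. \<forall>h<H. ST rnd d H M n \<sigma> k h = ST rnd d H M n \<sigma>' k h"
  proof (intro allI impI)
    fix k h assume kh: "k < L" "h < H"
    have eq: "\<And>x. x \<in> D \<Longrightarrow> sig \<sigma> x = sig \<sigma>' x" using s(4) by simp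
    show "ST rnd d H M n \<sigma> k h = ST rnd d H M n \<sigma>' k h"
    proof (rule goodst_eq[OF good good])
      fix a b assume ab: "a < d" "b < d"
      then have m: "(k, h, a, b) \<in> D" using kh by (auto simp: D_def)
      from eq[OF m] show "fst (ST rnd d H M n \<sigma> k h) a b = fst (ST rnd d H M n \<sigma>' k h) a b"
        using ab m by (simp add: sig_def)
    next
      fix a assume a: "a < d"
      then have m: "(k, h, a, d) \<in> D" using kh by (auto simp: D_def)
      from eq[OF m] show "snd (ST rnd d H M n \<sigma> k h) a = snd (ST rnd d H M n \<sigma>' k h) a"
        using m by (simp add: sig_def)
    qed
  qed
  then show ?thesis using s n2 unfolding P_def L_def by blast
qed


lemma percom_take: "take n (percom_input n \<sigma> \<tau>) = map \<sigma> [1..<Suc n]"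
  by (simp add: percom_input_def)

lemma percom_drop: "drop n (percom_input n \<sigma> \<tau>) = map \<tau> [1..<Suc n]"
  by (simp add: percom_input_def)

lemma percom_length: "length (percom_input n \<sigma> \<tau>) = 2 * n"
  by (simp add: percom_input_def)

lemma part1:
  "pbit p rnd \<and> real (length (layers M) * H * d * (d + 1) * p) < log 2 (fact n)
       \<longrightarrow> \<not> solves Linear rnd d H n M"
proof (intro impI notI)
  assume a: "pbit p rnd \<and> real (length (layers M) * H * d * (d + 1) * p) < log 2 (fact n)"
    and sol: "solves Linear rnd d H n M"
  from collision[of p rnd M H d n] a obtain \<sigma> \<sigma>' where
    c: "\<sigma> permutes {1..n}" "\<sigma>' permutes {1..n}" "\<sigma> \<noteq> \<sigma>'"
    "\<And>k h. k < length (layers M) \<Longrightarrow> h < H \<Longrightarrow> ST rnd d H M n \<sigma> k h = ST rnd d H M n \<sigma>' k h"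
    by blast
  have pid: "is_perm n id" unfolding is_perm_def by (rule bij_betw_id)
  have p1: "is_perm n \<sigma>" "is_perm n \<sigma>'" unfolding is_perm_def using c(1,2) by (auto intro: permutes_imp_bij)
  have "\<And>i. i \<in> {1..n} \<Longrightarrow> \<sigma> i = \<sigma>' i"
  proof -
    fix i assume i: "i \<in> {1..n}"
    have "\<sigma> i = model_out Linear rnd d H M (percom_input n \<sigma> id) (n + i - 1)"
      using sol p1(1) pid i unfolding solves_def by simp
    also have "\<dots> = model_out Linear rnd d H M (percom_input n \<sigma>' id) (n + i - 1)"
      unfolding model_out_def
      by (rule arg_cong[where f = "dec M"], rule key_nth[OF percom_take percom_take])
         (use i c(4) in \<open>auto simp: percom_length percom_drop\<close>)
    also have "\<dots> = \<sigma>' i"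
      using sol p1(2) pid i unfolding solves_def by simp
    finally show "\<sigma> i = \<sigma>' i" .
  qed
  then have "\<sigma> = \<sigma>'" by (rule perm_eq[OF c(1,2)])
  then show False using c(3) by simp
qed

lemma cot_inv:
  assumes "take n toks = map \<sigma> [1..<Suc n]" "take n toks' = map \<sigma>' [1..<Suc n]"
    "length toks = length toks'" "drop n toks = drop n toks'"
    "\<And>k h. k < length (layers M) \<Longrightarrow> h < H \<Longrightarrow> ST rnd d H M n \<sigma> k h = ST rnd d H M n \<sigma>' k h"
    "n < length toks"
  shows "length (cot_seq Linear rnd d H M toks t) = length toks + t \<and>
         length (cot_seq Linear rnd d H M toks' t) = length toks + t \<and>
         take n (cot_seq Linear rnd d H M toks t) = map \<sigma> [1..<Suc n] \<and>
         take n (cot_seq Linear rnd d H M toks' t) = map \<sigma>' [1..<Suc n] \<and>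
         drop n (cot_seq Linear rnd d H M toks t) = drop n (cot_seq Linear rnd d H M toks' t)"
proof (induct t)
  case 0
  then show ?case using assms by simp
next
  case (Suc t)
  define s where "s = cot_seq Linear rnd d H M toks t"
  define s' where "s' = cot_seq Linear rnd d H M toks' t"
  have IH: "length s = length toks + t" "length s' = length toks + t"
    "take n s = map \<sigma> [1..<Suc n]" "take n s' = map \<sigma>' [1..<Suc n]" "drop n s = drop n s'"
    using Suc unfolding s_def s'_def by auto
  have "hidden Linear rnd d H M s ! (length s - 1) = hidden Linear rnd d H M s' ! (length s - 1)"
    by (rule key_nth[OF IH(3,4) _ IH(5) assms(5)]) (use IH assms(6) in auto)
  then have e: "model_out Linear rnd d H M s (length s - 1) = model_out Linear rnd d H M s' (length s' - 1)"
    unfolding model_out_def using IH by simp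
  have ls: "n \<le> length s" "n \<le> length s'" using IH assms(6) by auto
  show ?case
    using IH e ls by (simp add: s_def[symmetric] s'_def[symmetric] Let_def)
qed

lemma part3:
  "pbit p rnd \<and> real (length (layers M) * H * d * (d + 1) * p) < log 2 (fact n)
       \<longrightarrow> \<not> solves_cot Linear rnd d H n M"
proof (intro impI notI)
  assume a: "pbit p rnd \<and> real (length (layers M) * H * d * (d + 1) * p) < log 2 (fact n)"
    and sol: "solves_cot Linear rnd d H n M"
  from collision[of p rnd M H d n] a obtain \<sigma> \<sigma>' where
    c: "\<sigma> permutes {1..n}" "\<sigma>' permutes {1..n}" "\<sigma> \<noteq> \<sigma>'"
    "\<And>k h. k < length (layers M) \<Longrightarrow> h < H \<Longrightarrow> ST rnd d H M n \<sigma> k h = ST rnd d H M n \<sigma>' k h"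
    and n2: "n \<ge> 2"
    by blast
  from sol obtain T r where T: "\<And>\<sigma> \<tau>. is_perm n \<sigma> \<Longrightarrow> is_perm n \<tau> \<Longrightarrow> (\<forall>i\<in>{1..n}. r i < T \<and>
           cot_seq Linear rnd d H M (percom_input n \<sigma> \<tau>) T ! (2 * n + r i) = \<sigma> (\<tau> i))"
    unfolding solves_cot_def by blast
  have pid: "is_perm n id" unfolding is_perm_def by (rule bij_betw_id)
  have p1: "is_perm n \<sigma>" "is_perm n \<sigma>'" unfolding is_perm_def using c(1,2) by (auto intro: permutes_imp_bij)
  have inv: "length (cot_seq Linear rnd d H M (percom_input n \<sigma> id) T) = 2 * n + T \<and>
         length (cot_seq Linear rnd d H M (percom_input n \<sigma>' id) T) = 2 * n + T \<and>
         take n (cot_seq Linear rnd d H M (percom_input n \<sigma> id) T) = map \<sigma> [1..<Suc n] \<and>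
         take n (cot_seq Linear rnd d H M (percom_input n \<sigma>' id) T) = map \<sigma>' [1..<Suc n] \<and>
         drop n (cot_seq Linear rnd d H M (percom_input n \<sigma> id) T) = drop n (cot_seq Linear rnd d H M (percom_input n \<sigma>' id) T)"
  proof -
    have "length (percom_input n \<sigma> id) = length (percom_input n \<sigma>' id)" by (simp add: percom_length)
    moreover have "drop n (percom_input n \<sigma> id) = drop n (percom_input n \<sigma>' id)" by (simp add: percom_drop)
    moreover have "n < length (percom_input n \<sigma> id)" using n2 by (simp add: percom_length)
    ultimately show ?thesis
      using cot_inv[OF percom_take percom_take _ _ c(4), where t=T] by (simp add: percom_length)
  qed
  have "\<And>i. i \<in> {1..n} \<Longrightarrow> \<sigma> i = \<sigma>' i"
  proof -
    fix i assume i: "i \<in> {1..n}"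
    have r1: "r i < T" and e1: "cot_seq Linear rnd d H M (percom_input n \<sigma> id) T ! (2 * n + r i) = \<sigma> i"
      using T[OF p1(1) pid] i by auto
    have e2: "cot_seq Linear rnd d H M (percom_input n \<sigma>' id) T ! (2 * n + r i) = \<sigma>' i"
      using T[OF p1(2) pid] i by auto
    define A where "A = cot_seq Linear rnd d H M (percom_input n \<sigma> id) T"
    define B where "B = cot_seq Linear rnd d H M (percom_input n \<sigma>' id) T"
    have lA: "length A = 2 * n + T" and dAB: "drop n A = drop n B" and lB: "length B = 2 * n + T"
      using inv unfolding A_def B_def by auto
    have "A ! (2 * n + r i) = drop n A ! (n + r i)" using lA r1 by (simp add: mult_2 add.assoc)
    also have "\<dots> = drop n B ! (n + r i)" by (simp only: dAB)
    also have "\<dots> = B ! (2 * n + r i)" using lB r1 by (simp add: mult_2 add.assoc)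
    finally show "\<sigma> i = \<sigma>' i" using e1 e2 unfolding A_def B_def by simp
  qed
  then have "\<sigma> = \<sigma>'" by (rule perm_eq[OF c(1,2)])
  then show False using c(3) by simp
qed




lemma fxp_int:
  assumes s: "s \<ge> 1" and z: "\<bar>z\<bar> < 2 ^ (s - 1)"
  shows "fxp (2 * s) (of_int z) = of_int z"
proof -
  have d: "2 * s div 2 = s" by simp
  have e: "(2::int) ^ (2 * s - 1) = 2 ^ (s - 1) * 2 ^ s"
    using s by (simp add: power_add[symmetric])
  have zb: "\<bar>z\<bar> \<le> 2 ^ (s - 1) - 1" using z by simp
  have "\<bar>z * 2 ^ s\<bar> \<le> (2 ^ (s - 1) - 1) * 2 ^ s"
    using zb by (simp add: abs_mult mult_right_mono)
  also have "\<dots> \<le> 2 ^ (2 * s - 1) - 1"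
  proof -
    have "(1::int) \<le> 2 ^ s" by simp
    then show ?thesis using e by (simp add: algebra_simps)
  qed
  finally have b: "\<bar>z * 2 ^ s\<bar> \<le> 2 ^ (2 * s - 1) - 1" .
  have r: "round (real_of_int z * 2 ^ s) = z * 2 ^ s"
    by (metis of_int_mult of_int_numeral of_int_power round_of_int)
  show ?thesis
    unfolding fxp_def Let_def d r using b by (simp add: abs_le_iff)
qed


lemma fxp_err:
  assumes s: "s \<ge> 1" and x: "\<bar>x\<bar> \<le> 2 ^ (s - 1) - 1"
  shows "\<bar>fxp (2 * s) x - x\<bar> \<le> 1 / 2 ^ (s + 1)"
proof -
  define r where "r = round (x * 2 ^ s)"
  have d: "2 * s div 2 = s" by simp
  have e: "(2::real) ^ (2 * s - 1) = 2 ^ (s - 1) * 2 ^ s"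
    using s by (simp add: power_add[symmetric])
  have r1: "\<bar>of_int r - x * 2 ^ s\<bar> \<le> 1/2" unfolding r_def by (rule of_int_round_abs_le)
  have "\<bar>x * 2 ^ s\<bar> \<le> (2 ^ (s - 1) - 1) * 2 ^ s"
    using x by (simp add: abs_mult mult_right_mono)
  also have "\<dots> = 2 ^ (2 * s - 1) - 2 ^ s" using e by (simp add: algebra_simps)
  finally have "\<bar>x * 2 ^ s\<bar> \<le> 2 ^ (2 * s - 1) - 2 ^ s" .
  moreover have "(2::real) \<le> 2 ^ s" using s
    by (metis power_one_right power_increasing one_le_numeral)
  ultimately have "real_of_int \<bar>r\<bar> < 2 ^ (2 * s - 1)" using r1 by linarith
  then have "real_of_int \<bar>r\<bar> < real_of_int (2 ^ (2 * s - 1))" by simp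
  then have "\<bar>r\<bar> < 2 ^ (2 * s - 1)" by (simp only: of_int_less_iff)
  then have rb: "\<bar>r\<bar> \<le> 2 ^ (2 * s - 1) - 1" by simp
  have f: "fxp (2 * s) x = of_int r / 2 ^ s"
    unfolding fxp_def Let_def d r_def[symmetric] using rb by (simp add: abs_le_iff)
  have "fxp (2 * s) x - x = (of_int r - x * 2 ^ s) / 2 ^ s" unfolding f by (simp add: field_simps)
  then have "\<bar>fxp (2 * s) x - x\<bar> = \<bar>of_int r - x * 2 ^ s\<bar> / 2 ^ s" by simp
  also have "\<dots> \<le> (1/2) / 2 ^ s" using r1 by (intro divide_right_mono) auto
  finally show ?thesis by simp
qed

lemma softmax_bound:
  fixes sc v :: "nat \<Rightarrow> real"
  assumes fin: "finite J" and j0: "j0 \<in> J" and gap: "\<And>j. j \<in> J \<Longrightarrow> j \<noteq> j0 \<Longrightarrow> sc j \<le> sc j0 - lam"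
    and vb: "\<And>j. j \<in> J \<Longrightarrow> \<bar>v j - v j0\<bar> \<le> V"
  shows "\<bar>(\<Sum>j\<in>J. exp (sc j) * v j) / (\<Sum>j\<in>J. exp (sc j)) - v j0\<bar> \<le> real (card J) * V / exp lam"
proof -
  define W where "W = (\<Sum>j\<in>J. exp (sc j))"
  have W0: "exp (sc j0) \<le> W" unfolding W_def
    by (rule member_le_sum[OF j0]) (auto simp: fin)
  have Wp: "W > 0" using W0 by (metis exp_gt_zero order_less_le_trans)
  have V0: "V \<ge> 0" using vb[OF j0] by simp
  have "(\<Sum>j\<in>J. exp (sc j) * v j) / W - v j0 = (\<Sum>j\<in>J. exp (sc j) * (v j - v j0)) / W"
    using Wp by (simp add: W_def field_simps sum_subtractf sum_distrib_right sum_distrib_left algebra_simps)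
  then have "\<bar>(\<Sum>j\<in>J. exp (sc j) * v j) / W - v j0\<bar> = \<bar>\<Sum>j\<in>J. exp (sc j) * (v j - v j0)\<bar> / W"
    using Wp by simp
  also have "\<dots> \<le> (\<Sum>j\<in>J. exp (sc j0) / exp lam * V) / W"
  proof (rule divide_right_mono[OF _ less_imp_le[OF Wp]])
    have "\<bar>\<Sum>j\<in>J. exp (sc j) * (v j - v j0)\<bar> \<le> (\<Sum>j\<in>J. \<bar>exp (sc j) * (v j - v j0)\<bar>)"
      by (rule sum_abs)
    also have "\<dots> \<le> (\<Sum>j\<in>J. exp (sc j0) / exp lam * V)"
    proof (rule sum_mono)
      fix j assume j: "j \<in> J"
      show "\<bar>exp (sc j) * (v j - v j0)\<bar> \<le> exp (sc j0) / exp lam * V"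
      proof (cases "j = j0")
        case True
        then show ?thesis using V0 by simp
      next
        case False
        have "exp (sc j) \<le> exp (sc j0 - lam)" using gap[OF j False] by simp
        also have "\<dots> = exp (sc j0) / exp lam" by (simp add: exp_diff)
        finally have a: "exp (sc j) \<le> exp (sc j0) / exp lam" .
        have "\<bar>exp (sc j) * (v j - v j0)\<bar> = exp (sc j) * \<bar>v j - v j0\<bar>" by (simp add: abs_mult)
        also have "\<dots> \<le> exp (sc j0) / exp lam * V"
          by (rule mult_mono[OF a vb[OF j]]) auto
        finally show ?thesis .
      qed
    qed
    finally show "\<bar>\<Sum>j\<in>J. exp (sc j) * (v j - v j0)\<bar> \<le> (\<Sum>j\<in>J. exp (sc j0) / exp lam * V)" .
  qed
  also have "\<dots> = real (card J) * V / exp lam * (exp (sc j0) / W)" by simp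
  also have "\<dots> \<le> real (card J) * V / exp lam * 1"
  proof (rule mult_left_mono)
    show "exp (sc j0) / W \<le> 1" using W0 Wp by simp
    show "0 \<le> real (card J) * V / exp lam" using V0 by simp
  qed
  finally show ?thesis unfolding W_def by simp
qed


definition mm :: "nat \<Rightarrow> nat" where "mm n = nat \<lceil>log 2 (real n)\<rceil>"
definition NN :: "nat \<Rightarrow> nat" where "NN n = 2 ^ mm n"
definition ss :: "nat \<Rightarrow> nat" where "ss n = 4 * mm n + 6"
definition lamb :: "nat \<Rightarrow> real" where "lamb n = 8 * real (NN n) ^ 2"

lemma n_le_NN: assumes "1 \<le> n" shows "n \<le> NN n"
proof -
  have l0: "0 \<le> log 2 (real n)" using assms by simp
  have "real n = 2 powr log 2 (real n)" using assms by simp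
  also have "\<dots> \<le> 2 powr real (mm n)"
  proof (rule powr_mono)
    have c: "real (mm n) = real_of_int \<lceil>log 2 (real n)\<rceil>" unfolding mm_def using l0 by simp
    show "log 2 (real n) \<le> real (mm n)" unfolding c by (rule le_of_int_ceiling)
  qed simp
  also have "\<dots> = real (NN n)" by (simp add: NN_def powr_realpow)
  finally show ?thesis by linarith
qed

lemma mm_bound: assumes "2 \<le> n" shows "real (mm n) \<le> 2 * log 2 (real n)"
proof -
  have l1: "1 \<le> log 2 (real n)" using assms by simp
  have c: "real (mm n) = real_of_int \<lceil>log 2 (real n)\<rceil>" unfolding mm_def using l1 by simp
  have "real (mm n) \<le> log 2 (real n) + 1" unfolding c by (rule of_int_ceiling_le_add_one)
  then show ?thesis using l1 by linarith
qed

lemma NN_pos: "NN n \<ge> 1" by (simp add: NN_def)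

lemma rep:
  assumes "\<bar>z\<bar> \<le> 16 * int (NN n) ^ 3"
  shows "fxp (2 * ss n) (of_int z) = of_int z"
proof (rule fxp_int)
  show "1 \<le> ss n" by (simp add: ss_def)
  have "(2::int) ^ (ss n - 1) = 32 * (2 ^ mm n) ^ 4"
    by (simp add: ss_def power_add power_mult[symmetric] mult.commute)
  also have "\<dots> = 32 * int (NN n) ^ 4" by (simp add: NN_def)
  finally have e: "(2::int) ^ (ss n - 1) = 32 * int (NN n) ^ 4" .
  have N1: "int (NN n) \<ge> 1" using NN_pos by simp
  have "int (NN n) ^ 3 \<le> int (NN n) ^ 4" using N1 by (intro power_increasing) auto
  moreover have "int (NN n) ^ 3 \<ge> 1" using N1 by simp
  ultimately show "\<bar>z\<bar> < 2 ^ (ss n - 1)" using assms e by linarith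
qed

lemma rep_nat:
  assumes "k \<le> 16 * NN n ^ 3"
  shows "fxp (2 * ss n) (real k) = real k"
proof -
  have "int k \<le> int (16 * NN n ^ 3)" using assms by (simp only: of_nat_le_iff)
  then have "\<bar>int k\<bar> \<le> 16 * int (NN n) ^ 3" by simp
  from rep[OF this] show ?thesis by simp
qed

lemma rep_neg_nat:
  assumes "k \<le> 16 * NN n ^ 3"
  shows "fxp (2 * ss n) (- real k) = - real k"
proof -
  have "int k \<le> int (16 * NN n ^ 3)" using assms by (simp only: of_nat_le_iff)
  then have "\<bar>- int k\<bar> \<le> 16 * int (NN n) ^ 3" by simp
  from rep[OF this] show ?thesis by simp
qed


definition LL :: "nat \<Rightarrow> nat" where "LL n = 8 * NN n ^ 2"

abbreviation rr :: "nat \<Rightarrow> real \<Rightarrow> real" where "rr n \<equiv> fxp (2 * ss n)"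

definition emb_f :: "nat \<Rightarrow> nat \<Rightarrow> nat \<Rightarrow> nat \<Rightarrow> real" where
  "emb_f n tok pos c = (if pos < n then (if c = 0 then real (pos + 1) else if c = 1 then real ((pos + 1) ^ 2)
        else if c = 2 then real tok else 0)
     else (if c = 2 then 1 else if c = 3 then real tok else 0))"

definition lay :: "nat \<Rightarrow> layer" where
  "lay n = \<lparr>Qw = (\<lambda>h a b. if a = 0 \<and> b = 3 then real (2 * LL n) else if a = 1 \<and> b = 2 then - real (LL n) else 0),
     Kw = (\<lambda>h a b. if a = b \<and> a < 2 then 1 else 0),
     Vw = (\<lambda>h a b. if a = 0 \<and> b = 2 then 1 else 0),
     phi = (\<lambda>h x. x),
     mlp = (\<lambda>x y c. if c = 0 then of_int (round (y 0)) else 0)\<rparr>"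

definition Mdl :: "nat \<Rightarrow> model" where
  "Mdl n = \<lparr>emb = emb_f n, layers = [lay n], dec = (\<lambda>v. nat (round (v 0)))\<rparr>"

lemma sum4: "(\<Sum>b<(4::nat). f b) = f 0 + f 1 + f 2 + (f 3 :: real)"
  by (simp add: eval_nat_numeral)

lemma rr0: "rr n 0 = 0" using rep_nat[of 0 n] by simp
lemma rr1: "rr n 1 = 1" using rep_nat[of 1 n] NN_pos[of n]
  by simp

lemma LL_le: "2 * LL n * t \<le> 16 * NN n ^ 3" if "t \<le> NN n" for t
proof -
  have "2 * LL n * t = 16 * NN n ^ 2 * t" by (simp add: LL_def)
  also have "\<dots> \<le> 16 * NN n ^ 2 * NN n" using that by simp
  also have "\<dots> = 16 * NN n ^ 3" by (simp add: power2_eq_square power3_eq_cube)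
  finally show ?thesis .
qed

lemma small_le: "k \<le> NN n \<Longrightarrow> k \<le> 16 * NN n ^ 3"
  using NN_pos[of n]
  by (metis le_trans mult_le_mono mult_numeral_1 numeral_le_iff power_increasing one_le_numeral
        power_one_right le_refl semiring_norm(68) zero_less_numeral le_numeral_extra(2))

lemma sq_le: "k \<le> NN n \<Longrightarrow> k ^ 2 \<le> 16 * NN n ^ 3"
proof -
  assume "k \<le> NN n"
  then have "k ^ 2 \<le> NN n ^ 2" by (simp add: power_mono)
  also have "\<dots> \<le> NN n ^ 3" using NN_pos[of n] by (intro power_increasing) auto
  also have "\<dots> \<le> 16 * NN n ^ 3" by simp
  finally show ?thesis .
qed

lemma rQ: "rr n (Qw (lay n) h a b) = Qw (lay n) h a b"
proof -
  have "LL n \<le> 2 * LL n * 1" by simp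
  also have "\<dots> \<le> 16 * NN n ^ 3" by (rule LL_le) (use NN_pos in auto)
  finally have l1: "LL n \<le> 16 * NN n ^ 3" .
  have l2: "2 * LL n \<le> 16 * NN n ^ 3" using LL_le[of 1 n] NN_pos[of n] by simp
  show ?thesis unfolding lay_def using rep_nat[OF l2] rep_neg_nat[OF l1] rr0 by simp
qed

lemma rK: "rr n (Kw (lay n) h a b) = Kw (lay n) h a b"
  unfolding lay_def using rr0 rr1 by simp

lemma rV: "rr n (Vw (lay n) h a b) = Vw (lay n) h a b"
  unfolding lay_def using rr0 rr1 by simp

lemma projQ:
  "proj (rr n) 4 1 (Qw (lay n) h) x = rvec (rr n) 4 (\<lambda>a. if a = 0 then real (2 * LL n) * x 3 else if a = 1 then - real (LL n) * x 2 else 0)"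
proof -
  have "mv 4 (4 * 1) (\<lambda>a b. rr n (Qw (lay n) h a b)) x = (\<lambda>a. if a = 0 then real (2 * LL n) * x 3 else if a = 1 then - real (LL n) * x 2 else 0)"
    unfolding rQ by (rule ext) (simp add: mv_def sum4 lay_def)
  then show ?thesis unfolding proj_def by simp
qed

lemma projK:
  "proj (rr n) 4 1 (Kw (lay n) h) x = rvec (rr n) 4 (\<lambda>a. if a < 2 then x a else 0)"
proof -
  have "mv 4 (4 * 1) (\<lambda>a b. rr n (Kw (lay n) h a b)) x = (\<lambda>a. if a < 2 then x a else 0)"
  proof (rule ext)
    fix a show "mv 4 (4 * 1) (\<lambda>a b. rr n (Kw (lay n) h a b)) x a = (if a < 2 then x a else 0)"
      unfolding rK by (cases "a = 0"; cases "a = 1") (auto simp: mv_def sum4 lay_def)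
  qed
  then show ?thesis unfolding proj_def by simp
qed

lemma projV:
  "proj (rr n) 4 1 (Vw (lay n) h) x = rvec (rr n) 4 (\<lambda>a. if a = 0 then x 2 else 0)"
proof -
  have "mv 4 (4 * 1) (\<lambda>a b. rr n (Vw (lay n) h a b)) x = (\<lambda>a. if a = 0 then x 2 else 0)"
    unfolding rV by (rule ext) (auto simp: mv_def sum4 lay_def)
  then show ?thesis unfolding proj_def by simp
qed


lemma emb_rvec:
  assumes "n \<le> NN n" "tok \<le> n"
  shows "rvec (rr n) (4 * 1) (emb_f n tok pos) = emb_f n tok pos"
proof (rule ext)
  fix c
  have t: "tok \<le> 16 * NN n ^ 3" using assms small_le by (meson le_trans)
  show "rvec (rr n) (4 * 1) (emb_f n tok pos) c = emb_f n tok pos c"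
  proof (cases "pos < n")
    case True
    then have p: "pos + 1 \<le> NN n" using assms by simp
    have p1: "pos + 1 \<le> 16 * NN n ^ 3" by (rule small_le[OF p])
    have p2: "(pos + 1) ^ 2 \<le> 16 * NN n ^ 3" by (rule sq_le[OF p])
    show ?thesis using True rep_nat[OF p1] rep_nat[OF p2] rep_nat[OF t] rr0
      unfolding rvec_def emb_f_def by auto
  next
    case False
    then show ?thesis using rep_nat[OF t] rr0 rr1 unfolding rvec_def emb_f_def by auto
  qed
qed

lemma q_eq:
  assumes "n \<le> NN n" "tok \<le> n" "\<not> pos < n"
  shows "proj (rr n) 4 1 (Qw (lay n) h) (emb_f n tok pos)
       = (\<lambda>a. if a = 0 then real (2 * LL n * tok) else if a = 1 then - real (LL n) else 0)"
proof -
  have t: "tok \<le> NN n" using assms by simp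
  have l1: "LL n \<le> 16 * NN n ^ 3" using LL_le[of 1 n] NN_pos[of n] by simp
  have "rr n (real (2 * LL n * tok)) = real (2 * LL n * tok)" by (rule rep_nat[OF LL_le[OF t]])
  then show ?thesis unfolding projQ using assms rep_neg_nat[OF l1] rr0
    by (auto simp: rvec_def emb_f_def)
qed

lemma k_eq1:
  assumes "n \<le> NN n" "pos < n"
  shows "proj (rr n) 4 1 (Kw (lay n) h) (emb_f n tok pos)
       = (\<lambda>a. if a = 0 then real (pos + 1) else if a = 1 then real ((pos + 1) ^ 2) else 0)"
proof -
  have p: "pos + 1 \<le> NN n" using assms by simp
  have p1: "pos + 1 \<le> 16 * NN n ^ 3" by (rule small_le[OF p])
  have p2: "(pos + 1) ^ 2 \<le> 16 * NN n ^ 3" by (rule sq_le[OF p])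
  show ?thesis unfolding projK using assms rep_nat[OF p1] rep_nat[OF p2] rr0
  proof (intro ext)
    fix a show "rvec (rr n) 4 (\<lambda>a. if a < 2 then emb_f n tok pos a else 0) a =
          (if a = 0 then real (pos + 1) else if a = 1 then real ((pos + 1) ^ 2) else 0)"
      using assms rep_nat[OF p1] rep_nat[OF p2] rr0
      by (cases "a = 0"; cases "a = 1") (auto simp: rvec_def emb_f_def)
  qed
qed

lemma k_eq2:
  assumes "\<not> pos < n"
  shows "proj (rr n) 4 1 (Kw (lay n) h) (emb_f n tok pos) = (\<lambda>a. 0)"
proof (intro ext)
  fix a show "proj (rr n) 4 1 (Kw (lay n) h) (emb_f n tok pos) a = 0"
    unfolding projK using assms rr0
    by (cases "a = 0"; cases "a = 1") (auto simp: rvec_def emb_f_def)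
qed

lemma v_eq:
  assumes "n \<le> NN n" "tok \<le> n"
  shows "proj (rr n) 4 1 (Vw (lay n) h) (emb_f n tok pos) 0 = (if pos < n then real tok else 1)"
proof -
  have t: "tok \<le> 16 * NN n ^ 3" using assms small_le by (meson le_trans)
  show ?thesis unfolding projV using rep_nat[OF t] rr1 by (simp add: rvec_def emb_f_def)
qed


lemma gap_lemma:
  fixes L t j :: nat
  assumes "t \<noteq> j + 1"
  shows "real (2 * L * t) * real (j + 1) - real L * real ((j + 1) ^ 2) \<le> real L * real t ^ 2 - real L"
proof -
  have "\<bar>real t - real (j + 1)\<bar> \<ge> 1" using assms by (cases "t < j + 1") auto
  then have "(real t - real (j + 1)) ^ 2 \<ge> 1"
    by (metis abs_ge_self abs_le_square_iff abs_one one_power2 power2_abs order_trans)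
  then have "real L * (real t - real (j + 1)) ^ 2 \<ge> real L * 1" by (intro mult_left_mono) auto
  then show ?thesis by (simp add: power2_eq_square algebra_simps)
qed

lemma NN_pow: "(2::real) ^ (ss n - 1) = 32 * real (NN n) ^ 4"
proof -
  have "(2::real) ^ (ss n - 1) = 32 * (2 ^ mm n) ^ 4"
    by (simp add: ss_def power_add power_mult[symmetric] mult.commute)
  then show ?thesis by (simp add: NN_def)
qed

lemma main_pos:
  assumes n2: "n \<ge> 2" and len: "length toks = 2 * n"
    and tk: "\<And>j. j < 2 * n \<Longrightarrow> toks ! j \<in> {1..n}"
    and i: "n \<le> i" "i < 2 * n"
  shows "model_out Full (rr n) 4 1 (Mdl n) toks i = toks ! (toks ! i - 1)"
proof -
  have nN: "n \<le> NN n" using n2 n_le_NN by simp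
  define t where "t = toks ! i"
  have t1: "1 \<le> t" "t \<le> n" using tk[OF i(2)] by (auto simp: t_def)
  define j0 where "j0 = t - 1"
  have j0: "j0 < n" "j0 \<le> i" "j0 + 1 = t" using t1 i by (auto simp: j0_def)
  define a where "a = toks ! j0"
  have a1: "1 \<le> a" "a \<le> n" using tk[of j0] j0 i by (auto simp: a_def)
  define xs where "xs = map (\<lambda>j. rvec (rr n) (4 * 1) (emb (Mdl n) (toks ! j) j)) [0..<length toks]"
  have hid: "hidden Full (rr n) 4 1 (Mdl n) toks = apply_layer Full (rr n) 4 1 (lay n) xs"
    by (simp add: hidden_def xs_def Mdl_def)
  have lxs: "length xs = 2 * n" by (simp add: xs_def len)
  have xsj: "\<And>j. j < 2 * n \<Longrightarrow> xs ! j = emb_f n (toks ! j) j"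
  proof -
    fix j assume j: "j < 2 * n"
    have "toks ! j \<le> n" using tk[OF j] by simp
    then show "xs ! j = emb_f n (toks ! j) j"
      using j emb_rvec[OF nN] by (simp add: xs_def Mdl_def len)
  qed
  define q where "q = proj (rr n) 4 1 (Qw (lay n) 0) (xs ! i)"
  have qe: "q = (\<lambda>a. if a = 0 then real (2 * LL n * t) else if a = 1 then - real (LL n) else 0)"
    unfolding q_def xsj[OF i(2)] t_def[symmetric] using q_eq[OF nN t1(2)] i by simp
  define sc where "sc = (\<lambda>j. if j < n then real (2 * LL n * t) * real (j + 1) - real (LL n) * real ((j + 1) ^ 2) else 0)"
  define vv where "vv = (\<lambda>j. if j < n then real (toks ! j) else 1)"
  have sce: "\<And>j. j \<le> i \<Longrightarrow> dotp 4 q (proj (rr n) 4 1 (Kw (lay n) 0) (xs ! j)) = sc j"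
  proof -
    fix j assume j: "j \<le> i"
    then have j2: "j < 2 * n" using i by simp
    show "dotp 4 q (proj (rr n) 4 1 (Kw (lay n) 0) (xs ! j)) = sc j"
    proof (cases "j < n")
      case True
      then show ?thesis unfolding xsj[OF j2] k_eq1[OF nN True] qe sc_def
        by (simp add: dotp_def sum4)
    next
      case False
      then show ?thesis unfolding xsj[OF j2] k_eq2[OF False] qe sc_def
        by (simp add: dotp_def sum4)
    qed
  qed
  have vve: "\<And>j. j \<le> i \<Longrightarrow> proj (rr n) 4 1 (Vw (lay n) 0) (xs ! j) 0 = vv j"
  proof -
    fix j assume j: "j \<le> i"
    then have j2: "j < 2 * n" using i by simp
    have "toks ! j \<le> n" using tk[OF j2] by simp
    then show "proj (rr n) 4 1 (Vw (lay n) 0) (xs ! j) 0 = vv j"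
      unfolding xsj[OF j2] vv_def by (rule v_eq[OF nN])
  qed
  define y where "y = (\<Sum>j\<in>{..i}. exp (sc j) * vv j) / (\<Sum>j\<in>{..i}. exp (sc j))"
  have ho: "head_out Full (rr n) 4 1 (lay n) 0 xs i 0 = rr n y"
  proof -
    have "head_out Full (rr n) 4 1 (lay n) 0 xs i 0
        = rr n ((\<Sum>j\<le>i. exp (dotp 4 q (proj (rr n) 4 1 (Kw (lay n) 0) (xs ! j))) * proj (rr n) 4 1 (Vw (lay n) 0) (xs ! j) 0)
              / (\<Sum>j\<le>i. exp (dotp 4 q (proj (rr n) 4 1 (Kw (lay n) 0) (xs ! j)))))"
      unfolding head_out_def q_def by (simp add: rvec_def Let_def)
    also have "\<dots> = rr n y"
    proof -
      have s1: "(\<Sum>j\<le>i. exp (dotp 4 q (proj (rr n) 4 1 (Kw (lay n) 0) (xs ! j))) * proj (rr n) 4 1 (Vw (lay n) 0) (xs ! j) 0)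
          = (\<Sum>j\<in>{..i}. exp (sc j) * vv j)"
        by (rule sum.cong) (simp_all only: refl sce vve atMost_iff)
      have s2: "(\<Sum>j\<le>i. exp (dotp 4 q (proj (rr n) 4 1 (Kw (lay n) 0) (xs ! j))))
          = (\<Sum>j\<in>{..i}. exp (sc j))"
        by (rule sum.cong) (simp_all only: refl sce atMost_iff)
      show ?thesis unfolding y_def s1 s2 ..
    qed
    finally show ?thesis .
  qed
  have sc0: "sc j0 = real (LL n) * real t ^ 2"
    using j0 unfolding sc_def by (simp add: power2_eq_square algebra_simps)
  have gap: "\<And>j. j \<in> {..i} \<Longrightarrow> j \<noteq> j0 \<Longrightarrow> sc j \<le> sc j0 - real (LL n)"
  proof -
    fix j assume j: "j \<in> {..i}" "j \<noteq> j0"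
    show "sc j \<le> sc j0 - real (LL n)"
    proof (cases "j < n")
      case True
      have "t \<noteq> j + 1" using j j0 by auto
      from gap_lemma[OF this, of "LL n"] show ?thesis using True unfolding sc0 by (simp add: sc_def)
    next
      case False
      have "real (LL n) * 1 \<le> real (LL n) * real t ^ 2" using t1 by (intro mult_left_mono) auto
      then show ?thesis using False unfolding sc0 by (simp add: sc_def)
    qed
  qed
  have vvj0: "vv j0 = real a" using j0 by (simp add: vv_def a_def)
  have vb: "\<And>j. j \<in> {..i} \<Longrightarrow> \<bar>vv j - vv j0\<bar> \<le> real n"
  proof -
    fix j assume j: "j \<in> {..i}"
    then have j2: "j < 2 * n" using i by simp
    have "1 \<le> vv j" "vv j \<le> real n" using tk[OF j2] n2 by (auto simp: vv_def)
    then show "\<bar>vv j - vv j0\<bar> \<le> real n" using a1 vvj0 by auto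
  qed
  have sb: "\<bar>y - vv j0\<bar> \<le> real (card {..i}) * real n / exp (real (LL n))"
    unfolding y_def
  proof (rule softmax_bound)
    show "\<And>j. j \<in> {..i} \<Longrightarrow> j \<noteq> j0 \<Longrightarrow> sc j \<le> sc j0 - real (LL n)" by (rule gap)
    show "\<And>j. j \<in> {..i} \<Longrightarrow> \<bar>vv j - vv j0\<bar> \<le> real n" by (rule vb)
  qed (use j0 in auto)
  have r4: "real (card {..i}) * real n / exp (real (LL n)) \<le> 1 / 4"
  proof -
    have c: "real (card {..i}) \<le> 2 * real n" using i by simp
    have "real n \<le> real (NN n)" using nN by simp
    then have "real n ^ 2 \<le> real (NN n) ^ 2" by (intro power_mono) auto
    then have L8: "8 * real n ^ 2 \<le> real (LL n)" by (simp add: LL_def)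
    have e: "real (LL n) < exp (real (LL n))"
      using exp_ge_add_one_self[of "real (LL n)"] by linarith
    have np: "real n > 0" using n2 by simp
    have "real (card {..i}) * real n \<le> 2 * real n * real n" using c np by (intro mult_right_mono) auto
    also have "\<dots> = (8 * real n ^ 2) / 4" by (simp add: power2_eq_square)
    also have "\<dots> \<le> real (LL n) / 4" using L8 by simp
    also have "\<dots> \<le> exp (real (LL n)) / 4" using e by simp
    finally show ?thesis by (simp add: divide_simps)
  qed
  have yb: "\<bar>y - real a\<bar> \<le> 1 / 4" using order_trans[OF sb r4] vvj0 by simp
  have ssb: "ss n \<ge> 6" by (simp add: ss_def)
  have "real a \<le> real n" using a1 by simp
  moreover have "y - real a \<le> 1/4" "real a - y \<le> 1/4" using yb by (simp_all only: abs_le_iff) linarith+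
  ultimately have "y \<le> real n + 1" "- y \<le> real n + 1" by linarith+
  then have "\<bar>y\<bar> \<le> real n + 1" by (simp only: abs_le_iff)
  also have "\<dots> \<le> 2 ^ (ss n - 1) - 1"
  proof -
    have N1: "real (NN n) \<ge> 1" using NN_pos[of n] by simp
    have "real (NN n) \<le> real (NN n) ^ 4" using N1 by (metis power_one_right power_increasing one_le_numeral)
    moreover have "real n \<le> real (NN n)" using nN by simp
    ultimately show ?thesis unfolding NN_pow using N1 by linarith
  qed
  finally have ye: "\<bar>rr n y - y\<bar> \<le> 1 / 2 ^ (ss n + 1)" by (intro fxp_err) (auto simp: ss_def)
  have "(2::real) ^ 7 \<le> 2 ^ (ss n + 1)" using ssb by (intro power_increasing) auto
  then have "1 / (2::real) ^ (ss n + 1) \<le> 1 / 2 ^ 7" by (intro divide_left_mono) auto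
  with ye have ye2: "\<bar>rr n y - y\<bar> \<le> 1 / 2 ^ 7" by linarith
  have "\<bar>rr n y - real a\<bar> \<le> \<bar>rr n y - y\<bar> + \<bar>y - real a\<bar>" using abs_triangle_ineq[of "rr n y - y" "y - real a"] by simp
  also have "\<dots> < 1 / 2" using ye2 yb by simp
  finally have "\<bar>rr n y - real_of_int (int a)\<bar> < 1 / 2" by simp
  then have ro: "round (rr n y) = int a" by (rule round_unique')
  have a16: "a \<le> 16 * NN n ^ 3" using a1 nN small_le by (meson le_trans)
  have ml: "\<And>x z. mlp (lay n) x z 0 = of_int (round (z 0))" by (simp add: lay_def)
  have ch: "\<And>f. concat_heads 4 1 f 0 = f 0 0" by (simp add: concat_heads_def)
  have "(hidden Full (rr n) 4 1 (Mdl n) toks ! i) 0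
      = rr n (mlp (lay n) (xs ! i) (concat_heads 4 1 (\<lambda>h. head_out Full (rr n) 4 1 (lay n) h xs i)) 0)"
    unfolding hid using i lxs by (simp add: apply_layer_def rvec_def)
  also have "\<dots> = rr n (of_int (round (rr n y)))" unfolding ml ch ho ..
  also have "\<dots> = real a" using ro rep_nat[OF a16] by simp
  finally have "(hidden Full (rr n) 4 1 (Mdl n) toks ! i) 0 = real a" .
  then show ?thesis unfolding model_out_def by (simp add: Mdl_def a_def j0_def t_def)
qed


lemma percom_nth1: "j < n \<Longrightarrow> percom_input n \<sigma> \<tau> ! j = \<sigma> (j + 1)"
  by (simp add: percom_input_def nth_append del: upt_Suc)

lemma percom_nth2: "n \<le> j \<Longrightarrow> j < 2 * n \<Longrightarrow> percom_input n \<sigma> \<tau> ! j = \<tau> (j - n + 1)"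
  by (simp add: percom_input_def nth_append del: upt_Suc)

lemma solves_Mdl:
  assumes n2: "n \<ge> 2"
  shows "solves Full (fxp (2 * ss n)) 4 1 n (Mdl n)"
  unfolding solves_def
proof (intro allI impI ballI)
  fix \<sigma> \<tau> i assume ps: "is_perm n \<sigma>" and pt: "is_perm n \<tau>" and i: "i \<in> {1..n}"
  define toks where "toks = percom_input n \<sigma> \<tau>"
  have len: "length toks = 2 * n" by (simp add: toks_def percom_input_def)
  have tk: "\<And>j. j < 2 * n \<Longrightarrow> toks ! j \<in> {1..n}"
  proof -
    fix j assume j: "j < 2 * n"
    show "toks ! j \<in> {1..n}"
    proof (cases "j < n")
      case True
      then show ?thesis using ps unfolding toks_def percom_nth1[OF True] is_perm_def
        by (intro bij_betw_apply[OF ps[unfolded is_perm_def]]) auto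
    next
      case False
      then have nj: "n \<le> j" by simp
      show ?thesis using j unfolding toks_def percom_nth2[OF nj j] is_perm_def
        by (intro bij_betw_apply[OF pt[unfolded is_perm_def]]) auto
    qed
  qed
  have ii: "n \<le> n + i - 1" "n + i - 1 < 2 * n" using i by auto
  have t: "toks ! (n + i - 1) = \<tau> i" using ii i unfolding toks_def by (simp add: percom_nth2)
  have ti: "\<tau> i \<in> {1..n}" using i by (rule bij_betw_apply[OF pt[unfolded is_perm_def]])
  have tl: "\<tau> i - 1 < n" "\<tau> i - 1 + 1 = \<tau> i" using ti by auto
  have "toks ! (\<tau> i - 1) = \<sigma> (\<tau> i)" unfolding toks_def percom_nth1[OF tl(1)] tl(2) ..
  then show "model_out Full (fxp (2 * ss n)) 4 1 (Mdl n) (percom_input n \<sigma> \<tau>) (n + i - 1) = \<sigma> (\<tau> i)"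
    using main_pos[OF n2 len tk ii] t unfolding toks_def by simp
qed

lemma part2:
  "\<exists>(c::real) (k::nat). \<forall>n\<ge>2. \<exists>M H d p.
       length (layers M) = 1 \<and> solves Full (fxp p) d H n M \<and>
       real (H * d * p) \<le> c * (log 2 (real n)) ^ k"
proof (rule exI[of _ 112], rule exI[of _ 1], intro allI impI)
  fix n :: nat assume n2: "n \<ge> 2"
  have l1: "1 \<le> log 2 (real n)" using n2 by simp
  have "real (1 * 4 * (2 * ss n)) = 32 * real (mm n) + 48" by (simp add: ss_def)
  also have "\<dots> \<le> 112 * log 2 (real n) ^ 1" using mm_bound[OF n2] l1 by simp
  finally have b: "real (1 * 4 * (2 * ss n)) \<le> 112 * log 2 (real n) ^ 1" .
  show "\<exists>M H d p. length (layers M) = 1 \<and> solves Full (fxp p) d H n M \<and>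
       real (H * d * p) \<le> 112 * (log 2 (real n)) ^ 1"
    using solves_Mdl[OF n2] b by (intro exI[of _ "Mdl n"] exI[of _ 1] exI[of _ 4] exI[of _ "2 * ss n"]) (simp add: Mdl_def)
qed


theorem theoremA6:
  shows
   "(\<forall>(rnd::real \<Rightarrow> real) p M H d n.
       pbit p rnd \<and> real (length (layers M) * H * d * (d + 1) * p) < log 2 (fact n)
       \<longrightarrow> \<not> solves Linear rnd d H n M)
  \<and> (\<exists>(c::real) (k::nat). \<forall>n\<ge>2. \<exists>M H d p.
       length (layers M) = 1 \<and> solves Full (fxp p) d H n M \<and>
       real (H * d * p) \<le> c * (log 2 (real n)) ^ k)
  \<and> (\<forall>(rnd::real \<Rightarrow> real) p M H d n.
       pbit p rnd \<and> real (length (layers M) * H * d * (d + 1) * p) < log 2 (fact n)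
       \<longrightarrow> \<not> solves_cot Linear rnd d H n M)"
  using part1 part2 part3 by blast


end
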